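(* Let $t$ be a positive integer and let $G$ be a finite group (not necessarily abelian, written additively) such that the smallest prime divisor $p$ of $|G|$ satisfies $p>t$. Let $a_1,\dots,a_n$ be distinct non-identity elements of $G$ and let $M_1=[a_1^{\alpha_1},\dots,a_n^{\alpha_n}]$ and $M_2=[a_1^{\beta_1},\dots,a_n^{\beta_n}]$ be multisets (with nonnegative integer multiplicities $\alpha_i,\beta_i$). Assume that the underlying set of $M_2$ (i.e. $\{a_i:\beta_i>0\}$) has size larger than $2t^2$. Then there is a $t$-weakly sequenceable multiset $M_3$ such that $M_1\subseteq M_3\subseteq M_1\cup M_2$ and $|M_3\setminus M_1|\leq t^2$.
   Context: $[a_1^{\lambda_1},\dots,a_n^{\lambda_n}]$ denotes the multiset containing $a_i$ with multiplicity $\lambda_i$. For multisets, $\subseteq$ means multiplicity-wise inequality, $M_1\cup M_2$ is the multiset whose multiplicity of $a_i$ is $\alpha_i+\beta_i$, and $M_3\setminus M_1$ is the multiset difference (multiplicities subtracted); $|\cdot|$ is the size counted with multiplicity. Given a multiset $M$ of size $m$, a $t$-weak ordering (or $t$-weak sequencing) of $M$ is a sequence $(y_1,\dots,y_m)$ in which each element of $M$ appears exactly as many times as its multiplicity, such that the partial sums $s_0=0$, $s_i=y_1+y_2+\dots+y_i$ ($1\le i\le m$, summed left to right) satisfy $s_i\neq s_j$ whenever $0\le i<j\le m$ and $j-i\le t$. $M$ is $t$-weakly sequenceable if it admits a $t$-weak ordering. *)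

theory Defs
  imports "HOL-Algebra.Group" "HOL-Library.Multiset" "HOL-Computational_Algebra.Primes"
begin

text \<open>The group G is written multiplicatively in HOL-Algebra; its operation plays the
role of the (not necessarily commutative) addition of the paper.\<close>

definition partial_sum :: "('a, 'b) monoid_scheme \<Rightarrow> 'a list \<Rightarrow> nat \<Rightarrow> 'a" where
  "partial_sum G ys i = foldl (\<lambda>s y. s \<otimes>\<^bsub>G\<^esub> y) \<one>\<^bsub>G\<^esub> (take i ys)"

definition t_weak_ordering :: "('a, 'b) monoid_scheme \<Rightarrow> nat \<Rightarrow> 'a multiset \<Rightarrow> 'a list \<Rightarrow> bool" where
  "t_weak_ordering G t M ys \<longleftrightarrow> mset ys = M \<and>
     (\<forall>i j. i < j \<and> j \<le> length ys \<and> j - i \<le> t \<longrightarrow> partial_sum G ys i \<noteq> partial_sum G ys j)"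

definition t_weakly_sequenceable :: "('a, 'b) monoid_scheme \<Rightarrow> nat \<Rightarrow> 'a multiset \<Rightarrow> bool" where
  "t_weakly_sequenceable G t M \<longleftrightarrow> (\<exists>ys. t_weak_ordering G t M ys)"

end

theory Submission
  imports Defs "HOL-Algebra.Multiplicative_Group"
begin

definition valid :: "('a, 'b) monoid_scheme \<Rightarrow> nat \<Rightarrow> 'a list \<Rightarrow> bool" where
  "valid G t ys \<longleftrightarrow>
     (\<forall>i j. i < j \<and> j \<le> length ys \<and> j - i \<le> t \<longrightarrow> partial_sum G ys i \<noteq> partial_sum G ys j)"

lemma ps_snoc_le: "i \<le> length ys \<Longrightarrow> partial_sum G (ys @ zs) i = partial_sum G ys i"
  by (simp add: partial_sum_def)

lemma ps_snoc_last: "partial_sum G (ys @ [y]) (Suc (length ys)) = partial_sum G ys (length ys) \<otimes>\<^bsub>G\<^esub> y"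
  by (simp add: partial_sum_def)

lemma valid_snoc:
  "valid G t (ys @ [y]) \<longleftrightarrow> valid G t ys \<and>
     (\<forall>i. i \<le> length ys \<and> Suc (length ys) - i \<le> t \<longrightarrow>
        partial_sum G ys i \<noteq> partial_sum G ys (length ys) \<otimes>\<^bsub>G\<^esub> y)"
  (is "?L \<longleftrightarrow> ?R")
proof
  assume L: ?L
  show ?R
  proof
    show "valid G t ys" unfolding valid_def
    proof (intro allI impI)
      fix i j assume h: "i < j \<and> j \<le> length ys \<and> j - i \<le> t"
      then show "partial_sum G ys i \<noteq> partial_sum G ys j"
        using L[unfolded valid_def, rule_format, of i j] ps_snoc_le[of i ys G "[y]"] ps_snoc_le[of j ys G "[y]"]
        by auto
    qed
  next
    show "\<forall>i. i \<le> length ys \<and> Suc (length ys) - i \<le> t \<longrightarrow>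
        partial_sum G ys i \<noteq> partial_sum G ys (length ys) \<otimes>\<^bsub>G\<^esub> y"
    proof (intro allI impI)
      fix i assume h: "i \<le> length ys \<and> Suc (length ys) - i \<le> t"
      then show "partial_sum G ys i \<noteq> partial_sum G ys (length ys) \<otimes>\<^bsub>G\<^esub> y"
        using L[unfolded valid_def, rule_format, of i "Suc (length ys)"] ps_snoc_le[of i ys G "[y]"]
          ps_snoc_last[of G ys y] by auto
    qed
  qed
next
  assume R: ?R
  show ?L unfolding valid_def
  proof (intro allI impI)
    fix i j assume h: "i < j \<and> j \<le> length (ys @ [y]) \<and> j - i \<le> t"
    show "partial_sum G (ys @ [y]) i \<noteq> partial_sum G (ys @ [y]) j"
    proof (cases "j \<le> length ys")
      case True
      then show ?thesis using h R[THEN conjunct1, unfolded valid_def, rule_format, of i j]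
          ps_snoc_le[of i ys G "[y]"] ps_snoc_le[of j ys G "[y]"] by auto
    next
      case False
      then have "j = Suc (length ys)" using h by auto
      then show ?thesis using h R[THEN conjunct2, rule_format, of i]
          ps_snoc_le[of i ys G "[y]"] ps_snoc_last[of G ys y] by auto
    qed
  qed
qed

lemma (in monoid) foldl_mult_carrier:
  "a \<in> carrier G \<Longrightarrow> set xs \<subseteq> carrier G \<Longrightarrow> foldl (\<lambda>s y. s \<otimes> y) a xs \<in> carrier G"
  by (induction xs arbitrary: a) auto

lemma (in monoid) ps_carrier:
  "set ys \<subseteq> carrier G \<Longrightarrow> partial_sum G ys i \<in> carrier G"
  unfolding partial_sum_def
  by (rule foldl_mult_carrier) (auto dest: in_set_takeD)

lemma (in monoid) foldl_shift:
  "a \<in> carrier G \<Longrightarrow> set xs \<subseteq> carrier G \<Longrightarrow>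
   foldl (\<lambda>s y. s \<otimes> y) a xs = a \<otimes> foldl (\<lambda>s y. s \<otimes> y) \<one> xs"
proof (induction xs arbitrary: a)
  case Nil then show ?case by simp
next
  case (Cons x xs)
  have xc: "x \<in> carrier G" and xsc: "set xs \<subseteq> carrier G" using Cons.prems by auto
  have fc: "foldl (\<lambda>s y. s \<otimes> y) \<one> xs \<in> carrier G" by (rule foldl_mult_carrier[OF one_closed xsc])
  have "foldl (\<lambda>s y. s \<otimes> y) a (x # xs) = foldl (\<lambda>s y. s \<otimes> y) (a \<otimes> x) xs" by simp
  also have "\<dots> = (a \<otimes> x) \<otimes> foldl (\<lambda>s y. s \<otimes> y) \<one> xs"
    by (rule Cons.IH) (use Cons.prems xc xsc in auto)
  also have "\<dots> = a \<otimes> (x \<otimes> foldl (\<lambda>s y. s \<otimes> y) \<one> xs)"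
    using Cons.prems xc fc by (simp add: m_assoc)
  also have "x \<otimes> foldl (\<lambda>s y. s \<otimes> y) \<one> xs = foldl (\<lambda>s y. s \<otimes> y) \<one> (x # xs)"
  proof -
    have "foldl (\<lambda>s y. s \<otimes> y) \<one> (x # xs) = foldl (\<lambda>s y. s \<otimes> y) x xs"
      using xc by simp
    also have "\<dots> = x \<otimes> foldl (\<lambda>s y. s \<otimes> y) \<one> xs" by (rule Cons.IH[OF xc xsc])
    finally show ?thesis by simp
  qed
  finally show ?case .
qed

lemma (in monoid) ps_append:
  assumes "set ys \<subseteq> carrier G" "set zs \<subseteq> carrier G"
  shows "partial_sum G (ys @ zs) (length ys + k) = partial_sum G ys (length ys) \<otimes> partial_sum G zs k"
proof -
  have "partial_sum G (ys @ zs) (length ys + k) = foldl (\<lambda>s y. s \<otimes> y) (partial_sum G ys (length ys)) (take k zs)"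
    by (simp add: partial_sum_def)
  also have "\<dots> = partial_sum G ys (length ys) \<otimes> partial_sum G zs k"
    unfolding partial_sum_def[of G zs k]
    by (rule foldl_shift) (use assms ps_carrier in \<open>auto dest: in_set_takeD\<close>)
  finally show ?thesis .
qed

lemma (in monoid) foldl_rep:
  assumes "z \<in> carrier G" "x \<in> carrier G"
  shows "foldl (\<lambda>s y. s \<otimes> y) z (replicate k x) = z \<otimes> x [^] k"
  using assms(1)
proof (induction k arbitrary: z)
  case 0 then show ?case by simp
next
  case (Suc k)
  have "foldl (\<lambda>s y. s \<otimes> y) z (replicate (Suc k) x) = foldl (\<lambda>s y. s \<otimes> y) (z \<otimes> x) (replicate k x)"
    by simp
  also have "\<dots> = (z \<otimes> x) \<otimes> x [^] k" using Suc.IH[of "z \<otimes> x"] Suc.prems assms(2) by simp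
  also have "\<dots> = z \<otimes> (x \<otimes> x [^] k)" using Suc.prems assms(2) by (simp add: m_assoc)
  also have "x \<otimes> x [^] k = x [^] Suc k" by (rule nat_pow_Suc2[OF assms(2), symmetric])
  finally show ?case .
qed

lemma (in monoid) ps_zrep:
  assumes "z \<in> carrier G" "x \<in> carrier G"
  shows "partial_sum G (z # replicate n x) (Suc j) = z \<otimes> x [^] (min j n)"
proof -
  have "partial_sum G (z # replicate n x) (Suc j) = foldl (\<lambda>s y. s \<otimes> y) z (replicate (min j n) x)"
    using assms by (simp add: partial_sum_def)
  also have "\<dots> = z \<otimes> x [^] (min j n)" by (rule foldl_rep[OF assms])
  finally show ?thesis .
qed

lemma (in group) pow_not_one:
  assumes "\<forall>p::nat. prime p \<and> p dvd card (carrier G) \<longrightarrow> p > t"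
    and "x \<in> carrier G" "x \<noteq> \<one>" "1 \<le> j" "j \<le> t"
  shows "x [^] j \<noteq> \<one>"
proof
  assume "x [^] j = \<one>"
  then have d: "ord x dvd j" using pow_eq_id assms by auto
  have "ord x \<noteq> 1" using ord_eq_1 assms by auto
  then obtain p :: nat where p: "prime p" "p dvd ord x" using prime_factor_nat by blast
  have "p dvd order G" by (rule dvd_trans[OF p(2) ord_dvd_group_order[OF assms(2)]])
  then have "p dvd card (carrier G)" by (simp add: order_def)
  then have "p > t" using assms p by auto
  moreover have "p dvd j" using p(2) d by (rule dvd_trans)
  then have "p \<le> j" using assms(4) by (intro dvd_imp_le) auto
  ultimately show False using assms by auto
qed


lemma (in group) solve1:
  assumes "a \<in> carrier G" "b \<in> carrier G" "c \<in> carrier G" "a = b \<otimes> c"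
  shows "c = inv b \<otimes> a"
  using assms by (simp add: m_assoc[symmetric])

lemma (in group) solve2:
  assumes "a \<in> carrier G" "b \<in> carrier G" "z \<in> carrier G" "w \<in> carrier G" "a = b \<otimes> z \<otimes> w"
  shows "z = inv b \<otimes> a \<otimes> inv w"
proof -
  have "inv b \<otimes> a = z \<otimes> w" using inv_solve_left'[of "z \<otimes> w" b a] assms by (simp add: m_assoc)
  then show ?thesis using inv_solve_right[of z "inv b \<otimes> a" w] assms by simp
qed

lemma (in group) pow_eq_split:
  assumes "x \<in> carrier G" "x [^] j = x [^] (k::nat)" "j < k"
  shows "x [^] (k - j) = \<one>"
proof -
  have "x [^] k = x [^] j \<otimes> x [^] (k - j)" using assms nat_pow_mult[of x j "k - j"] by simp
  then show ?thesis using assms l_cancel_one'[of "x [^] j" "x [^] (k - j)"] by simp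
qed

lemma (in group) ext:
  assumes ordt: "\<And>x j. x \<in> carrier G \<Longrightarrow> x \<noteq> \<one> \<Longrightarrow> 1 \<le> j \<Longrightarrow> j \<le> t \<Longrightarrow> x [^] j \<noteq> \<one>"
  shows "valid G t ys \<Longrightarrow> set ys \<subseteq> carrier G \<Longrightarrow> set_mset R \<subseteq> carrier G - {\<one>}
   \<Longrightarrow> U \<subseteq> carrier G - {\<one>} \<Longrightarrow> finite U \<Longrightarrow> t*t + min (card (set_mset R)) t \<le> card U \<Longrightarrow>
   \<exists>zs W. valid G t (ys @ zs) \<and> mset zs = R + mset W \<and> set W \<subseteq> U \<and> distinct W
      \<and> length W \<le> min (card (set_mset R)) t"
proof (induction "size R" arbitrary: R ys U rule: less_induct)
  case less
  note hyp = less.prems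
  show ?case
  proof (cases "R = {#}")
    case True
    then show ?thesis using hyp by (intro exI[of _ "[]"]) auto
  next
    case Rne: False
    show ?thesis
    proof (cases "\<exists>x\<in>#R. valid G t (ys @ [x])")
      case True
      then obtain x where x: "x \<in># R" "valid G t (ys @ [x])" by blast
      have sub: "set_mset (R - {#x#}) \<subseteq> set_mset R" by (meson in_diffD subsetI)
      have cardle: "card (set_mset (R - {#x#})) \<le> card (set_mset R)"
        by (rule card_mono[OF _ sub]) simp
      have "size (R - {#x#}) < size R" using x by (simp add: size_Diff1_less)
      moreover have "set (ys @ [x]) \<subseteq> carrier G" using hyp(2,3) x(1) by auto
      moreover have "set_mset (R - {#x#}) \<subseteq> carrier G - {\<one>}" using sub hyp(3) by blast
      moreover have "t * t + min (card (set_mset (R - {#x#}))) t \<le> card U"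
        using hyp(6) cardle by (meson add_le_mono1 le_trans min.mono order_refl add_left_mono)
      ultimately obtain zs W where zs: "valid G t ((ys @ [x]) @ zs)" "mset zs = R - {#x#} + mset W"
        "set W \<subseteq> U" "distinct W" "length W \<le> min (card (set_mset (R - {#x#}))) t"
        using less.hyps[of "R - {#x#}" "ys @ [x]" U] x(2) hyp(4,5) by blast
      have ml: "min (card (set_mset (R - {#x#}))) t \<le> min (card (set_mset R)) t"
        using cardle by simp
      show ?thesis
        apply (rule exI[of _ "x # zs"], rule exI[of _ W])
        using zs x ml by (auto simp: insert_DiffM)
    next
      case False
      let ?m = "length ys"
      let ?s = "partial_sum G ys"
      have scar: "\<And>i. ?s i \<in> carrier G" using hyp(2) ps_carrier by blast
      have Rsub: "set_mset R \<subseteq> (\<lambda>i. inv (?s ?m) \<otimes> ?s i) ` {?m + 1 - t..<?m}"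
      proof
        fix x assume xR: "x \<in> set_mset R"
        then have xc: "x \<in> carrier G" "x \<noteq> \<one>" using hyp(3) by auto
        from False xR have "\<not> valid G t (ys @ [x])" by auto
        then obtain i where i: "i \<le> ?m" "Suc ?m - i \<le> t" "?s i = ?s ?m \<otimes> x"
          using valid_snoc[of G t ys x] hyp(1) by auto
        have xeq: "x = inv (?s ?m) \<otimes> ?s i" using solve1[OF scar scar xc(1) i(3)] .
        have "i \<noteq> ?m"
        proof
          assume "i = ?m"
          then have "?s ?m = ?s ?m \<otimes> x" using i(3) by simp
          then show False using l_cancel_one'[of "?s ?m" x] scar xc by simp
        qed
        then have "i \<in> {?m + 1 - t..<?m}" using i by auto
        then show "x \<in> (\<lambda>i. inv (?s ?m) \<otimes> ?s i) ` {?m + 1 - t..<?m}" by (rule image_eqI[where f="\<lambda>i. inv (?s ?m) \<otimes> ?s i", OF xeq])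
      qed
      have "card (set_mset R) \<le> card ((\<lambda>i. inv (?s ?m) \<otimes> ?s i) ` {?m + 1 - t..<?m})"
        by (rule card_mono[OF _ Rsub]) simp
      also have "\<dots> \<le> card {?m + 1 - t..<?m}" by (rule card_image_le) simp
      finally have c1: "card (set_mset R) \<le> ?m - (?m + 1 - t)" by simp
      have c0: "card (set_mset R) \<ge> 1" using Rne by (simp add: Suc_le_eq card_gt_0_iff)
      have cR: "card (set_mset R) < t" using c1 c0 by linarith
      obtain x where xR: "x \<in># R" using Rne by blast
      have xc: "x \<in> carrier G" "x \<noteq> \<one>" using hyp(3) xR by auto
      define Forb where "Forb = (\<lambda>(i,j). inv (?s ?m) \<otimes> ?s i \<otimes> inv (x [^] j)) ` ({?m + 1 - t..?m} \<times> {..<t})"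
      have "card Forb \<le> card ({?m + 1 - t..?m} \<times> {..<t})" unfolding Forb_def by (rule card_image_le) simp
      also have "\<dots> = card {?m + 1 - t..?m} * t" by (simp add: card_cartesian_product)
      also have "card {?m + 1 - t..?m} \<le> t" by simp
      then have "card {?m + 1 - t..?m} * t \<le> t * t" by (rule mult_le_mono1)
      finally have cF: "card Forb \<le> t * t" .
      have "\<not> U \<subseteq> Forb"
      proof
        assume "U \<subseteq> Forb"
        then have "card U \<le> card Forb" by (rule card_mono[rotated]) (simp add: Forb_def)
        then show False using cF hyp(6) cR c0 by linarith
      qed
      then obtain z where z: "z \<in> U" "z \<notin> Forb" by blast
      have zc: "z \<in> carrier G" "z \<noteq> \<one>" using z hyp(4) by auto
      have t1: "1 \<le> t" using cR c0 by linarith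
      have zrep_c: "\<And>n. set (z # replicate n x) \<subseteq> carrier G" using zc xc by auto
      have L: "partial_sum G (ys @ z # replicate n x) (?m + Suc j) = ?s ?m \<otimes> (z \<otimes> x [^] (min j n))" for n j
      proof -
        have "partial_sum G (ys @ z # replicate n x) (?m + Suc j) = ?s ?m \<otimes> partial_sum G (z # replicate n x) (Suc j)"
          by (rule ps_append[OF hyp(2) zrep_c])
        then show ?thesis using ps_zrep[OF zc(1) xc(1)] by simp
      qed
      have V: "valid G t (ys @ z # replicate n x)" for n
      proof (induction n)
        case 0
        have "valid G t (ys @ [z])"
        proof (subst valid_snoc, intro conjI allI impI)
          show "valid G t ys" by (rule hyp(1))
          fix i assume i: "i \<le> ?m \<and> Suc ?m - i \<le> t"
          show "?s i \<noteq> ?s ?m \<otimes> z"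
          proof
            assume "?s i = ?s ?m \<otimes> z"
            then have "z = inv (?s ?m) \<otimes> ?s i \<otimes> inv (x [^] (0::nat))"
              using solve1[OF scar scar zc(1)] scar zc by simp
            then have "z \<in> Forb" unfolding Forb_def using i t1
              by (intro image_eqI[of _ _ "(i, 0)"]) auto
            then show False using z by blast
          qed
        qed
        then show ?case by simp
      next
        case (Suc n)
        let ?L = "ys @ z # replicate n x"
        have eq: "ys @ z # replicate (Suc n) x = ?L @ [x]" by (simp add: replicate_append_same[symmetric])
        have lenL: "length ?L = ?m + Suc n" by simp
        have last: "partial_sum G ?L (length ?L) \<otimes> x = ?s ?m \<otimes> z \<otimes> x [^] Suc n"
          using L[of n n] lenL xc zc scar by (simp add: m_assoc nat_pow_Suc)
        have "valid G t (?L @ [x])"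
        proof (subst valid_snoc, intro conjI allI impI)
          show "valid G t ?L" by (rule Suc.IH)
          fix i assume i: "i \<le> length ?L \<and> Suc (length ?L) - i \<le> t"
          show "partial_sum G ?L i \<noteq> partial_sum G ?L (length ?L) \<otimes> x"
          proof (cases "i \<le> ?m")
            case True
            have psi: "partial_sum G ?L i = ?s i" using True ps_snoc_le by blast
            show ?thesis
            proof
              assume "partial_sum G ?L i = partial_sum G ?L (length ?L) \<otimes> x"
              then have "?s i = ?s ?m \<otimes> z \<otimes> x [^] Suc n" using psi last by simp
              then have "z = inv (?s ?m) \<otimes> ?s i \<otimes> inv (x [^] Suc n)"
                using solve2[OF scar scar zc(1)] xc by simp
              then have "z \<in> Forb" unfolding Forb_def using i True lenL
                by (intro image_eqI[of _ _ "(i, Suc n)"]) auto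
              then show False using z by blast
            qed
          next
            case False
            have "i = ?m + Suc (i - Suc ?m)" "i - Suc ?m \<le> n" using False i lenL by auto
            then obtain j where j: "i = ?m + Suc j" "j \<le> n" by blast
            show ?thesis
            proof
              assume "partial_sum G ?L i = partial_sum G ?L (length ?L) \<otimes> x"
              then have "?s ?m \<otimes> (z \<otimes> x [^] j) = ?s ?m \<otimes> z \<otimes> x [^] Suc n"
                using L[of n j] j last by simp
              then have "x [^] j = x [^] Suc n" using scar zc xc by (simp add: m_assoc)
              then have "x [^] (Suc n - j) = \<one>" using pow_eq_split xc j by simp
              moreover have "1 \<le> Suc n - j" "Suc n - j \<le> t" using i j lenL by auto
              ultimately show False using ordt xc by blast
            qed
          qed
        qed
        then show ?case using eq by simp
      qed
      define r where "r = count R x"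
      define R' where "R' = filter_mset (\<lambda>y. y \<noteq> x) R"
      have R'set: "set_mset R' = set_mset R - {x}" unfolding R'_def by auto
      have cR': "card (set_mset R') = card (set_mset R) - 1" using R'set xR by simp
      have Rsplit: "R = R' + replicate_mset r x"
        unfolding R'_def r_def using multiset_partition[of R "\<lambda>y. y \<noteq> x"]
        by (simp add: filter_eq_replicate_mset)
      have "r \<ge> 1" using xR r_def by simp
      moreover have "size R = size R' + r" using Rsplit by (metis size_union size_replicate_mset)
      ultimately have "size R' < size R" by linarith
      moreover have "set (ys @ z # replicate r x) \<subseteq> carrier G" using hyp(2) zc xc by auto
      moreover have "set_mset R' \<subseteq> carrier G - {\<one>}" using R'set hyp(3) by auto
      moreover have "U - {z} \<subseteq> carrier G - {\<one>}" "finite (U - {z})" using hyp by auto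
      moreover have "t * t + min (card (set_mset R')) t \<le> card (U - {z})"
        using hyp(6) z(1) hyp(5) cR' cR c0 by simp
      ultimately obtain zs W where zs: "valid G t ((ys @ z # replicate r x) @ zs)"
        "mset zs = R' + mset W" "set W \<subseteq> U - {z}" "distinct W" "length W \<le> min (card (set_mset R')) t"
        using less.hyps[of R' "ys @ z # replicate r x" "U - {z}"] V[of r] by blast
      have g1: "valid G t (ys @ (z # replicate r x @ zs))" using zs(1) by simp
      have g2: "mset (z # replicate r x @ zs) = R + mset (z # W)"
      proof -
        have "mset (z # replicate r x @ zs) = add_mset z (replicate_mset r x + (R' + mset W))"
          using zs(2) by simp
        also have "\<dots> = (R' + replicate_mset r x) + mset (z # W)" by (simp add: ac_simps)
        finally show ?thesis using Rsplit by simp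
      qed
      have g3: "set (z # W) \<subseteq> U" "distinct (z # W)" using zs(3,4) z(1) by auto
      have g4: "length (z # W) \<le> min (card (set_mset R)) t" using zs(5) cR' cR c0 by simp
      show ?thesis using g1 g2 g3 g4 by blast
    qed
  qed
qed

theorem proposition2p2:
  fixes G :: "('a, 'b) monoid_scheme" and t :: nat and M1 M2 :: "'a multiset"
  assumes "group G" and "finite (carrier G)"
    and "t \<ge> 1"
    and "\<forall>p::nat. prime p \<and> p dvd card (carrier G) \<longrightarrow> p > t"
    and "set_mset M1 \<subseteq> carrier G - {\<one>\<^bsub>G\<^esub>}"
    and "set_mset M2 \<subseteq> carrier G - {\<one>\<^bsub>G\<^esub>}"
    and "card (set_mset M2) > 2 * t^2"
  shows "\<exists>M3. t_weakly_sequenceable G t M3 \<and> M1 \<subseteq># M3 \<and> M3 \<subseteq># M1 + M2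
              \<and> size (M3 - M1) \<le> t^2"
proof -
  interpret group G by (rule assms(1))
  have ordt: "\<And>x j. x \<in> carrier G \<Longrightarrow> x \<noteq> \<one>\<^bsub>G\<^esub> \<Longrightarrow> 1 \<le> j \<Longrightarrow> j \<le> t \<Longrightarrow> x [^]\<^bsub>G\<^esub> j \<noteq> \<one>\<^bsub>G\<^esub>"
    using pow_not_one[OF assms(4)] by blast
  have v0: "valid G t []" by (simp add: valid_def)
  have "t * t + min (card (set_mset M1)) t \<le> card (set_mset M2)"
  proof -
    have "t \<le> t * t" using assms(3) by simp
    moreover have "min (card (set_mset M1)) t \<le> t" by simp
    moreover have "2 * (t * t) < card (set_mset M2)" using assms(7) by (simp add: power2_eq_square)
    ultimately show ?thesis by linarith
  qed
  then have "\<exists>zs W. valid G t ([] @ zs) \<and> mset zs = M1 + mset W \<and> set W \<subseteq> set_mset M2 \<and> distinct W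
      \<and> length W \<le> min (card (set_mset M1)) t"
    using ext[OF ordt v0] assms(5,6) by simp
  then obtain zs W where zs: "valid G t zs" "mset zs = M1 + mset W" "set W \<subseteq> set_mset M2"
    "distinct W" "length W \<le> min (card (set_mset M1)) t"
    by auto
  have sub: "mset W \<subseteq># M2"
  proof (rule mset_subset_eqI)
    fix a
    show "count (mset W) a \<le> count M2 a"
    proof (cases "a \<in> set W")
      case True
      then have "count (mset W) a = 1" using zs(4) by (simp add: distinct_count_atmost_1)
      moreover have "count M2 a \<ge> 1" using True zs(3) by auto
      ultimately show ?thesis by simp
    next
      case False
      then have "count (mset W) a = 0" using count_mset_0_iff by metis
      then show ?thesis by (metis zero_le)
    qed
  qed
  have "t \<le> t^2" by (simp add: power2_eq_square)
  have a1: "t_weakly_sequenceable G t (M1 + mset W)"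
    unfolding t_weakly_sequenceable_def t_weak_ordering_def
    using zs(1,2) unfolding valid_def by blast
  have a2: "M1 \<subseteq># M1 + mset W" by simp
  have a3: "M1 + mset W \<subseteq># M1 + M2" using sub by simp
  have a4: "size (M1 + mset W - M1) \<le> t^2" using zs(5) \<open>t \<le> t^2\<close> by simp
  show ?thesis using a1 a2 a3 a4 by blast
qed

end
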